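(* Assume $\delta<d$ and $\gamma\ge1$. Then $$\frac{q(z,w)}{z^\gamma w^d}\longrightarrow 1\quad\text{as } |z|\to\infty \text{ and } |w|/|z|^\alpha\to\infty,$$ and there is $R_0>0$ such that for every $R\ge R_0$ the set $W_R=\{(z,w):|z|>R,\ |w|>R|z|^\alpha\}$ satisfies $f(W_R)\subset W_R$.
   Context: Let $p(z)=z^\delta+O(z^{\delta-1})$ be a monic polynomial of degree $\delta\ge 2$, and let $q(z,w)=b(z)w^d+(\text{terms of lower degree in } w)$ be a polynomial with $d=\deg_w q\ge 2$, where $b$ is a monic polynomial of degree $\gamma$. Let $f(z,w)=(p(z),q(z,w))$. For $\delta<d$, define the rational number (possibly negative) $$\alpha=\max\Big(\Big\{\frac{-\gamma}{d-\delta}\Big\}\cup\Big\{\frac{n_j-\gamma}{d-m_j}: z^{n_j}w^{m_j}\text{ a monomial appearing in } q \text{ with nonzero coefficient},\ m_j<d\Big\}\Big).$$ *)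

theory Defs
  imports "HOL-Analysis.Analysis" "HOL-Computational_Algebra.Polynomial"
begin

text \<open>A polynomial q(z,w) in two complex variables is represented as a polynomial
  in w whose coefficients are polynomials in z: q :: complex poly poly.
  The coefficient of the monomial z^n w^m is coeff (coeff q m) n.\<close>

definition eval2 :: "complex poly poly \<Rightarrow> complex \<Rightarrow> complex \<Rightarrow> complex" where
  "eval2 q z w = poly (map_poly (\<lambda>c. poly c z) q) w"

text \<open>The exponent alpha (for deg p = delta < d = deg_w q, gamma = deg of leading coefficient b).\<close>
definition alpha_exp :: "complex poly poly \<Rightarrow> nat \<Rightarrow> real" where
  "alpha_exp q \<delta> = Max ({ - real (degree (lead_coeff q)) / (real (degree q) - real \<delta>) }
      \<union> { (real n - real (degree (lead_coeff q))) / (real (degree q) - real m)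
           | n m. m < degree q \<and> coeff (coeff q m) n \<noteq> 0 })"

definition W_region :: "real \<Rightarrow> real \<Rightarrow> (complex \<times> complex) set" where
  "W_region \<alpha> R = {(z, w). norm z > R \<and> norm w > R * norm z powr \<alpha>}"

end

theory Submission imports Defs begin

lemma poly_sum_le:
  fixes P :: "complex poly"
  assumes "degree P \<le> n"
  shows "poly P x = (\<Sum>i\<le>n. coeff P i * x^i)"
  apply (subst poly_altdef)
  by (rule sum.mono_neutral_left) (use assms in \<open>auto simp: coeff_eq_0\<close>)

lemma eval2_expand:
  "eval2 q z w = poly (lead_coeff q) z * w ^ degree q + (\<Sum>m<degree q. poly (coeff q m) z * w ^ m)"
proof -
  have "eval2 q z w = (\<Sum>m\<le>degree q. coeff (map_poly (\<lambda>c. poly c z) q) m * w ^ m)"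
    unfolding eval2_def by (rule poly_sum_le) (rule map_poly_degree_leq)
  also have "\<dots> = (\<Sum>m\<le>degree q. poly (coeff q m) z * w ^ m)"
    by (simp add: coeff_map_poly)
  also have "\<dots> = poly (lead_coeff q) z * w ^ degree q + (\<Sum>m<degree q. poly (coeff q m) z * w ^ m)"
    by (simp add: lessThan_Suc_atMost[symmetric] sum.lessThan_Suc)
  finally show ?thesis .
qed

lemma ev_norm_ge: "eventually (\<lambda>z. c \<le> norm z) (filtercomap norm at_top)"
  using filterlim_filtercomap[of norm at_top] unfolding filterlim_at_top by blast

lemma monic_lim:
  fixes P :: "complex poly"
  assumes "lead_coeff P = 1"
  shows "((\<lambda>z. poly P z / z ^ degree P) \<longlongrightarrow> 1) (filtercomap norm at_top)"
proof -
  define k where "k = degree P"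
  have eq: "poly P z / z ^ k = (\<Sum>i\<le>k. coeff P i * z ^ i / z ^ k)" for z
    unfolding k_def poly_altdef by (simp add: sum_divide_distrib)
  have lim: "((\<lambda>z. coeff P i * z ^ i / z ^ k) \<longlongrightarrow> (if i = k then 1 else 0)) (filtercomap norm at_top)"
    if "i \<le> k" for i
  proof (cases "i = k")
    case True
    have "eventually (\<lambda>z. 1 = coeff P i * z ^ i / z ^ k) (filtercomap norm at_top)"
      using ev_norm_ge[of 1] by eventually_elim (use True assms in \<open>auto simp: k_def\<close>)
    then show ?thesis using True by (simp add: tendsto_eventually)
  next
    case False
    hence ik: "i < k" using that by simp
    have inv: "((\<lambda>z. norm (coeff P i) * inverse (norm z)) \<longlongrightarrow> 0) (filtercomap norm at_top)"
      using tendsto_mult_left[OF tendsto_inverse_0_at_top[OF filterlim_filtercomap[of norm at_top]], of "norm (coeff P i)"]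
      by simp
    have "eventually (\<lambda>z. norm (coeff P i * z ^ i / z ^ k) \<le> norm (coeff P i) * inverse (norm z)) (filtercomap norm at_top)"
      using ev_norm_ge[of 1]
    proof eventually_elim
      case (elim z)
      define x where "x = norm z"
      have x1: "1 \<le> x" using elim x_def by simp
      have kk: "x ^ k = x ^ i * x ^ (k - i)" using ik by (simp add: power_add[symmetric])
      have "x ^ 1 \<le> x ^ (k - i)" by (rule power_increasing) (use ik x1 in auto)
      hence ge: "x \<le> x ^ (k - i)" by simp
      have "norm (coeff P i * z ^ i / z ^ k) = norm (coeff P i) * x ^ i / x ^ k"
        by (simp add: norm_mult norm_divide norm_power x_def)
      also have "\<dots> = norm (coeff P i) * x ^ i / (x ^ i * x ^ (k - i))"
        by (simp only: kk)
      also have "\<dots> = norm (coeff P i) / x ^ (k - i)" using x1 by simp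
      also have "\<dots> \<le> norm (coeff P i) / x"
        by (rule divide_left_mono) (use ge x1 in auto)
      finally show ?case by (simp add: x_def divide_inverse)
    qed
    then have "((\<lambda>z. coeff P i * z ^ i / z ^ k) \<longlongrightarrow> 0) (filtercomap norm at_top)"
      by (rule Lim_null_comparison) (rule inv)
    then show ?thesis using False by simp
  qed
  have "((\<lambda>z. \<Sum>i\<le>k. coeff P i * z ^ i / z ^ k) \<longlongrightarrow> (\<Sum>i\<le>k. (if i = k then 1 else 0))) (filtercomap norm at_top)"
    by (rule tendsto_sum) (use lim in auto)
  then show ?thesis using eq unfolding k_def by simp
qed

theorem lemma5p3:
  fixes p :: "complex poly" and q :: "complex poly poly" and b :: "complex poly"
    and \<delta> d \<gamma> :: nat
  assumes p_monic: "lead_coeff p = 1" and p_deg: "degree p = \<delta>" and delta2: "\<delta> \<ge> 2"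
    and q_deg: "degree q = d" and d2: "d \<ge> 2"
    and b_def: "lead_coeff q = b" and b_monic: "lead_coeff b = 1" and b_deg: "degree b = \<gamma>"
    and delta_lt: "\<delta> < d" and gamma1: "\<gamma> \<ge> 1"
  shows "((\<lambda>(z, w). eval2 q z w / (z ^ \<gamma> * w ^ d)) \<longlongrightarrow> 1)
           (inf (filtercomap (\<lambda>(z, w). norm z) at_top)
                (filtercomap (\<lambda>(z, w). norm w / norm z powr alpha_exp q \<delta>) at_top))
       \<and> (\<exists>R0 > 0. \<forall>R \<ge> R0.
            (\<lambda>(z, w). (poly p z, eval2 q z w)) ` W_region (alpha_exp q \<delta>) R
              \<subseteq> W_region (alpha_exp q \<delta>) R)"
proof -
  define a where "a = alpha_exp q \<delta>"
  define S where "S = { - real (degree (lead_coeff q)) / (real (degree q) - real \<delta>) }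
      \<union> { (real n - real (degree (lead_coeff q))) / (real (degree q) - real m)
           | n m. m < degree q \<and> coeff (coeff q m) n \<noteq> 0 }"
  have aS: "a = Max S" unfolding a_def S_def alpha_exp_def ..
  have finS: "finite S"
  proof -
    have "{ (real n - real (degree (lead_coeff q))) / (real (degree q) - real m)
           | n m. m < degree q \<and> coeff (coeff q m) n \<noteq> 0 } \<subseteq>
      (\<lambda>(m,n). (real n - real (degree (lead_coeff q))) / (real (degree q) - real m)) `
         (SIGMA m:{..<degree q}. {..degree (coeff q m)})"
      by (force intro: le_degree)
    moreover have "finite ((\<lambda>(m,n). (real n - real (degree (lead_coeff q))) / (real (degree q) - real m)) `
         (SIGMA m:{..<degree q}. {..degree (coeff q m)}))" by auto
    ultimately show ?thesis unfolding S_def by (meson finite_Un finite_insert finite.emptyI finite_subset)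
  qed
  have aF1: "real n - real \<gamma> \<le> a * (real d - real m)" if "m < d" "coeff (coeff q m) n \<noteq> 0" for n m
  proof -
    have "(real n - real \<gamma>) / (real d - real m) \<in> S"
      unfolding S_def using that b_def b_deg q_deg by blast
    hence "(real n - real \<gamma>) / (real d - real m) \<le> a" using finS aS by simp
    moreover have "real d - real m > 0" using that by simp
    ultimately show ?thesis by (simp add: pos_divide_le_eq mult.commute)
  qed
  have aF2: "- real \<gamma> \<le> a * (real d - real \<delta>)"
  proof -
    have "- real \<gamma> / (real d - real \<delta>) \<in> S"
      unfolding S_def using b_def b_deg q_deg by blast
    hence "- real \<gamma> / (real d - real \<delta>) \<le> a" using finS aS by simp
    moreover have pos: "real d - real \<delta> > 0" using delta_lt by simp
    ultimately have "- real \<gamma> / (real d - real \<delta>) * (real d - real \<delta>) \<le> a * (real d - real \<delta>)"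
      by (intro mult_right_mono) auto
    then show ?thesis using pos by simp
  qed
  define F where "F = inf (filtercomap (\<lambda>x::complex\<times>complex. norm (fst x)) at_top)
                (filtercomap (\<lambda>x::complex\<times>complex. norm (snd x) / norm (fst x) powr a) at_top)"
  have Feq: "inf (filtercomap (\<lambda>(z, w). norm z) at_top)
                (filtercomap (\<lambda>(z, w). norm w / norm z powr alpha_exp q \<delta>) at_top) = F"
    unfolding F_def a_def by (simp add: case_prod_beta')
  define G where "G = (\<lambda>x::complex\<times>complex. eval2 q (fst x) (snd x) / (fst x ^ \<gamma> * snd x ^ d))"
  have Geq: "(\<lambda>(z, w). eval2 q z w / (z ^ \<gamma> * w ^ d)) = G"
    unfolding G_def by (simp add: case_prod_beta')
  have limz: "filterlim (\<lambda>x. norm (fst x)) at_top F"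
    unfolding F_def by (rule filterlim_mono[OF filterlim_filtercomap order_refl inf_le1])
  have limr: "filterlim (\<lambda>x. norm (snd x) / norm (fst x) powr a) at_top F"
    unfolding F_def by (rule filterlim_mono[OF filterlim_filtercomap order_refl inf_le2])
  have evz1: "eventually (\<lambda>x. 1 \<le> norm (fst x)) F"
    using limz unfolding filterlim_at_top by blast
  have evr1: "eventually (\<lambda>x. 1 \<le> norm (snd x) / norm (fst x) powr a) F"
    using limr unfolding filterlim_at_top by blast
  have evw: "eventually (\<lambda>x. snd x \<noteq> 0) F"
    using evr1 by eventually_elim auto
  have limt: "((\<lambda>x. norm (fst x) powr a / norm (snd x)) \<longlongrightarrow> 0) F"
    using tendsto_inverse_0_at_top[OF limr] by (simp add: inverse_divide)
  have limb: "((\<lambda>x. poly b (fst x) / fst x ^ \<gamma>) \<longlongrightarrow> 1) F"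
  proof -
    have "filterlim fst (filtercomap norm at_top) F"
      using limz by (simp add: filterlim_filtercomap_iff o_def)
    from filterlim_compose[OF monic_lim[OF b_monic] this] show ?thesis by (simp add: b_deg)
  qed
  define T where "T = (\<lambda>m n x. coeff (coeff q m) n * fst x ^ n * snd x ^ m / (fst x ^ \<gamma> * snd x ^ d))"
  have limT: "((\<lambda>x. T m n x) \<longlongrightarrow> 0) F" if "m < d" for m n
  proof (cases "coeff (coeff q m) n = 0")
    case True
    then show ?thesis by (simp add: T_def)
  next
    case False
    define c where "c = coeff (coeff q m) n"
    define e where "e = d - m"
    have e1: "e \<ge> 1" and de: "d = m + e" using that by (auto simp: e_def)
    have hn: "real n - real \<gamma> \<le> a * real e" using aF1[OF that False] that by (simp add: e_def)
    have "eventually (\<lambda>x. norm (T m n x) \<le> norm c * (norm (fst x) powr a / norm (snd x)) ^ e) F"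
      using evz1 evw
    proof eventually_elim
      case (elim x)
      define X where "X = norm (fst x)"
      define Y where "Y = norm (snd x)"
      have X1: "1 \<le> X" and Y0: "0 < Y" using elim by (auto simp: X_def Y_def)
      have "X ^ n / X ^ \<gamma> = X powr (real n - real \<gamma>)"
        using X1 by (simp add: powr_diff powr_realpow)
      also have "\<dots> \<le> X powr (a * real e)" by (rule powr_mono[OF hn X1])
      also have "\<dots> = (X powr a) ^ e"
        using X1 by (simp add: powr_power mult.commute)
      finally have h1: "X ^ n / X ^ \<gamma> \<le> (X powr a) ^ e" .
      have "norm (T m n x) = norm c * X ^ n * Y ^ m / (X ^ \<gamma> * (Y ^ m * Y ^ e))"
        unfolding T_def c_def X_def Y_def de
        by (simp add: norm_mult norm_divide norm_power power_add)
      also have "\<dots> = norm c * (X ^ n / X ^ \<gamma>) / Y ^ e"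
        using X1 Y0 by (simp add: field_simps)
      also have "\<dots> \<le> norm c * (X powr a) ^ e / Y ^ e"
        using h1 Y0 by (intro divide_right_mono mult_left_mono) auto
      also have "\<dots> = norm c * (X powr a / Y) ^ e" by (simp add: power_divide)
      finally show ?case by (simp add: X_def Y_def c_def)
    qed
    moreover have "((\<lambda>x. norm c * (norm (fst x) powr a / norm (snd x)) ^ e) \<longlongrightarrow> 0) F"
      using tendsto_mult_left[OF tendsto_power[OF limt, of e], of "norm c"] e1 by (simp add: power_0_left)
    ultimately show ?thesis by (rule Lim_null_comparison)
  qed
  have limsum: "((\<lambda>x. poly b (fst x) / fst x ^ \<gamma> + (\<Sum>m<d. \<Sum>n\<le>degree (coeff q m). T m n x)) \<longlongrightarrow> 1 + 0) F"
  proof (rule tendsto_add[OF limb])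
    have "((\<lambda>x. \<Sum>m<d. \<Sum>n\<le>degree (coeff q m). T m n x) \<longlongrightarrow> (\<Sum>m<d. \<Sum>n\<le>degree (coeff q m). 0)) F"
      by (intro tendsto_sum limT) simp
    then show "((\<lambda>x. \<Sum>m<d. \<Sum>n\<le>degree (coeff q m). T m n x) \<longlongrightarrow> 0) F" by simp
  qed
  have evG: "eventually (\<lambda>x. poly b (fst x) / fst x ^ \<gamma> + (\<Sum>m<d. \<Sum>n\<le>degree (coeff q m). T m n x) = G x) F"
    using evw
  proof eventually_elim
    case (elim x)
    define z where "z = fst x"
    define w where "w = snd x"
    have w0: "w \<noteq> 0" using elim w_def by simp
    have ex: "eval2 q z w = poly b z * w ^ d + (\<Sum>m<d. (\<Sum>n\<le>degree (coeff q m). coeff (coeff q m) n * z ^ n) * w ^ m)"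
    proof -
      have bq: "coeff q d = b" using b_def q_deg by simp
      have e0: "eval2 q z w = poly b z * w ^ d + (\<Sum>m<d. poly (coeff q m) z * w ^ m)"
        using eval2_expand[of q z w] q_deg bq by simp
      have "(\<Sum>m<d. poly (coeff q m) z * w ^ m) = (\<Sum>m<d. (\<Sum>n\<le>degree (coeff q m). coeff (coeff q m) n * z ^ n) * w ^ m)"
        by (rule sum.cong) (simp_all add: poly_altdef)
      then show ?thesis using e0 by simp
    qed
    have "G x = eval2 q z w / (z ^ \<gamma> * w ^ d)" unfolding G_def z_def w_def ..
    also have "\<dots> = poly b z * w ^ d / (z ^ \<gamma> * w ^ d) + (\<Sum>m<d. \<Sum>n\<le>degree (coeff q m). coeff (coeff q m) n * z ^ n * w ^ m / (z ^ \<gamma> * w ^ d))"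
      unfolding ex by (simp add: add_divide_distrib sum_divide_distrib sum_distrib_right)
    also have "\<dots> = poly b z / z ^ \<gamma> + (\<Sum>m<d. \<Sum>n\<le>degree (coeff q m). T m n x)"
      using w0 by (simp add: T_def z_def w_def)
    finally show ?case by (simp add: z_def)
  qed
  have part1: "(G \<longlongrightarrow> 1) F"
    using Lim_transform_eventually[OF limsum evG] by simp
  have "eventually (\<lambda>x. dist (G x) 1 < 1/2) F"
    using tendsto_iff[THEN iffD1, OF part1, rule_format, of "1/2"] by simp
  then obtain Pf Pg where Pf: "eventually Pf (filtercomap (\<lambda>x::complex\<times>complex. norm (fst x)) at_top)"
    and Pg: "eventually Pg (filtercomap (\<lambda>x::complex\<times>complex. norm (snd x) / norm (fst x) powr a) at_top)"
    and PfPg: "\<forall>x. Pf x \<and> Pg x \<longrightarrow> dist (G x) 1 < 1/2"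
    unfolding F_def eventually_inf by blast
  from Pf obtain Q1 where Q1: "eventually Q1 at_top" "\<forall>x. Q1 (norm (fst x)) \<longrightarrow> Pf x"
    unfolding eventually_filtercomap by blast
  from Q1(1) obtain R1 where R1: "\<forall>t\<ge>R1. Q1 t" unfolding eventually_at_top_linorder by blast
  from Pg obtain Q2 where Q2: "eventually Q2 at_top" "\<forall>x. Q2 (norm (snd x) / norm (fst x) powr a) \<longrightarrow> Pg x"
    unfolding eventually_filtercomap by blast
  from Q2(1) obtain R2 where R2: "\<forall>t\<ge>R2. Q2 t" unfolding eventually_at_top_linorder by blast
  have hR: "norm (G (z, w) - 1) < 1/2" if "R1 \<le> norm z" "R2 \<le> norm w / norm z powr a" for z w
    using PfPg Q1(2) Q2(2) R1 R2 that by (auto simp: dist_norm)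
  have "eventually (\<lambda>z. dist (poly p z / z ^ \<delta>) 1 < 1/2) (filtercomap norm at_top)"
    using tendsto_iff[THEN iffD1, OF monic_lim[OF p_monic], rule_format, of "1/2"] p_deg by simp
  then obtain Q3 where Q3: "eventually Q3 at_top" "\<forall>z. Q3 (norm z) \<longrightarrow> dist (poly p z / z ^ \<delta>) 1 < 1/2"
    unfolding eventually_filtercomap by blast
  from Q3(1) obtain Rp where Rp: "\<forall>t\<ge>Rp. Q3 t" unfolding eventually_at_top_linorder by blast
  have hp: "norm (poly p z / z ^ \<delta> - 1) < 1/2" if "Rp \<le> norm z" for z
    using Q3(2) Rp that by (auto simp: dist_norm)
  define K where "K = max (2 powr a) ((1/2) powr a)"
  have K0: "K > 0" unfolding K_def by (simp add: less_max_iff_disj)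
  define R0 where "R0 = max 2 (max R1 (max R2 (max Rp (2 * K))))"
  have main: "(poly p z, eval2 q z w) \<in> W_region a R"
    if RR0: "R \<ge> R0" and zw: "(z, w) \<in> W_region a R" for R z w
  proof -
    define X where "X = norm z"
    define Y where "Y = norm w"
    define Xa where "Xa = X powr a"
    have XR: "X > R" and YR: "Y > R * Xa" using zw by (auto simp: W_region_def X_def Y_def Xa_def)
    have R2': "R \<ge> 2" "R \<ge> R1" "R \<ge> R2" "R \<ge> Rp" "R \<ge> 2 * K" using RR0 unfolding R0_def by auto
    have X2: "X \<ge> 2" using XR R2' by simp
    have Xa0: "Xa > 0" unfolding Xa_def using X2 by simp
    have Y0: "Y > 0" using YR Xa0 R2' by (smt (verit) mult_pos_pos)
    have z0: "z \<noteq> 0" using X2 X_def by auto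
    have w0: "w \<noteq> 0" using Y0 Y_def by auto
    define s where "s = norm (poly p z) / X ^ \<delta>"
    have hps: "norm (poly p z / z ^ \<delta> - 1) < 1/2" using hp R2' XR X_def by simp
    have ns: "norm (poly p z / z ^ \<delta>) = s" by (simp add: s_def X_def norm_divide norm_power)
    have s_lo: "s > 1/2"
      using norm_triangle_ineq2[of 1 "poly p z / z ^ \<delta>"] hps ns
      by (simp add: norm_minus_commute)
    have s_hi: "s \<le> 2"
      using norm_triangle_ineq2[of "poly p z / z ^ \<delta>" 1] hps ns by simp
    have Xd0: "X ^ \<delta> > 0" using X2 by simp
    have Pe: "norm (poly p z) = s * X ^ \<delta>" using Xd0 X2 by (simp add: s_def)
    have "X ^ 2 \<le> X ^ \<delta>" by (rule power_increasing) (use delta2 X2 in auto)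
    moreover have "X \<le> X ^ 2 / 2" using X2 by (simp add: power2_eq_square) 
    ultimately have "X ^ \<delta> / 2 \<ge> X" by simp
    moreover have "s * X ^ \<delta> > 1/2 * X ^ \<delta>" using s_lo Xd0 by (rule mult_strict_right_mono)
    ultimately have p_big: "norm (poly p z) > R" using Pe XR by simp
    have spow: "s powr a \<le> K"
    proof (cases "a \<ge> 0")
      case True
      have "s powr a \<le> 2 powr a" by (rule powr_mono2) (use True s_lo s_hi in auto)
      then show ?thesis unfolding K_def by simp
    next
      case False
      have "s powr a \<le> (1/2) powr a" by (rule powr_mono2') (use False s_lo in auto)
      then show ?thesis unfolding K_def by simp
    qed
    have Ppow: "norm (poly p z) powr a \<le> K * X powr (real \<delta> * a)"
    proof -
      have "norm (poly p z) powr a = s powr a * (X ^ \<delta>) powr a"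
        unfolding Pe using s_lo Xd0 by (simp add: powr_mult)
      also have "(X ^ \<delta>) powr a = X powr (real \<delta> * a)"
        using X2 by (simp add: powr_realpow[symmetric] powr_powr)
      finally show ?thesis using spow by (simp add: mult_right_mono)
    qed
    have hG: "norm (G (z, w) - 1) < 1/2"
    proof (rule hR)
      show "R1 \<le> norm z" using XR R2' X_def by simp
      have "R < Y / Xa" using YR Xa0 by (simp add: pos_less_divide_eq)
      then show "R2 \<le> norm w / norm z powr a" using R2' by (simp add: Y_def Xa_def X_def)
    qed
    have nG: "norm (G (z, w)) = norm (eval2 q z w) / (X ^ \<gamma> * Y ^ d)"
      by (simp add: G_def X_def Y_def norm_divide norm_mult norm_power)
    have G_lo: "norm (G (z, w)) > 1/2"
      using norm_triangle_ineq2[of 1 "G (z, w)"] hG by (simp add: norm_minus_commute)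
    have XY0: "X ^ \<gamma> * Y ^ d > 0" using X2 Y0 by simp
    have q_lo: "norm (eval2 q z w) > X ^ \<gamma> * Y ^ d / 2"
      using G_lo XY0 unfolding nG by (simp add: pos_less_divide_eq field_simps)
    have Yd: "Y ^ d > (R * Xa) ^ d"
      by (rule power_strict_mono) (use YR Xa0 R2' d2 in auto)
    have Rd: "R * K \<le> R ^ d / 2"
    proof -
      have "R ^ 1 \<le> R ^ (d - 1)" by (rule power_increasing) (use d2 R2' in auto)
      hence "2 * K \<le> R ^ (d - 1)" using R2' by simp
      hence "R * (2 * K) \<le> R * R ^ (d - 1)" using R2' by (intro mult_left_mono) auto
      also have "R * R ^ (d - 1) = R ^ d" using d2 by (simp add: power_eq_if[of R d])
      finally show ?thesis by simp
    qed
    have Xexp: "X powr (real \<delta> * a) \<le> X ^ \<gamma> * Xa ^ d"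
    proof -
      have "X ^ \<gamma> * Xa ^ d = X powr (real \<gamma> + real d * a)"
        using X2 by (simp add: Xa_def powr_add powr_realpow powr_power)
      moreover have "X powr (real \<delta> * a) \<le> X powr (real \<gamma> + real d * a)"
        by (rule powr_mono) (use aF2 X2 in \<open>auto simp: algebra_simps\<close>)
      ultimately show ?thesis by simp
    qed
    have "R * norm (poly p z) powr a \<le> R * (K * X powr (real \<delta> * a))"
      using Ppow R2' by (intro mult_left_mono) auto
    also have "\<dots> = (R * K) * X powr (real \<delta> * a)" by simp
    also have "\<dots> \<le> (R ^ d / 2) * (X ^ \<gamma> * Xa ^ d)"
      by (intro mult_mono Rd Xexp) (use R2' K0 in auto)
    also have "\<dots> = X ^ \<gamma> * (R * Xa) ^ d / 2" by (simp add: power_mult_distrib)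
    also have "\<dots> < X ^ \<gamma> * Y ^ d / 2" using Yd X2 by simp
    also have "\<dots> < norm (eval2 q z w)" by (rule q_lo)
    finally have "R * norm (poly p z) powr a < norm (eval2 q z w)" .
    then show ?thesis using p_big unfolding W_region_def by simp
  qed
  have R00: "R0 > 0" unfolding R0_def by simp
  have P1: "((\<lambda>(z, w). eval2 q z w / (z ^ \<gamma> * w ^ d)) \<longlongrightarrow> 1)
           (inf (filtercomap (\<lambda>(z, w). norm z) at_top)
                (filtercomap (\<lambda>(z, w). norm w / norm z powr alpha_exp q \<delta>) at_top))"
    using part1 by (simp only: Feq Geq)
  have P2: "\<forall>R \<ge> R0. (\<lambda>(z, w). (poly p z, eval2 q z w)) ` W_region (alpha_exp q \<delta>) R
              \<subseteq> W_region (alpha_exp q \<delta>) R"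
    using main unfolding a_def by auto
  show ?thesis using P1 P2 R00 by blast
qed

end
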